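(* Let $q$ be a power of an odd prime $p$, let $b\in\mathbb{F}_q$ with $b\ne0$, and let $n\ge2$ be an integer. Let $r\ge0$ be such that $p^r$ divides $n+1$ but $p^{r+1}$ does not, and let $m\ge0$ be defined by $n+1=p^r(m+1)$. Assume $r\ge1$. If $q>2m+4$, then there exists $a\in\mathbb{F}_q$ such that $\hat C_n(a,b)$ is LCD.
   Context: For $a,b\in\mathbb{F}_q$ and $n\ge 2$, $\hat T_n(a,b)$ denotes the $n\times n$ symmetric tridiagonal Toeplitz matrix over $\mathbb{F}_q$ with all diagonal entries equal to $a$, all entries on the first super- and sub-diagonals equal to $b$, and all other entries $0$. $\hat C_n(a,b)$ is the $[2n,n]$ linear code over $\mathbb{F}_q$ with generator matrix $[I_n\mid \hat T_n(a,b)]$. A linear code $C$ is LCD if $C\cap C^\perp=\{0\}$ (Euclidean dual). (The paper's statement writes $2^r$ here; it is interpreted via the characteristic $p$ as in Theorem 2.10, which the proof invokes.) *)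

theory Defs
  imports Main "HOL-Computational_Algebra.Primes"
begin

text \<open>Vectors of length N over a field are modelled as functions nat \<Rightarrow> 'a
  that vanish outside {0..<N}; matrices as functions nat \<Rightarrow> nat \<Rightarrow> 'a
  (entries outside the index range are irrelevant).\<close>

definition tridiag_toeplitz :: "nat \<Rightarrow> 'a::field \<Rightarrow> 'a \<Rightarrow> nat \<Rightarrow> nat \<Rightarrow> 'a" where
  "tridiag_toeplitz n a b i j =
     (if i < n \<and> j < n then
        (if i = j then a else if i = Suc j \<or> j = Suc i then b else 0)
      else 0)"

definition gen_IT :: "nat \<Rightarrow> 'a::field \<Rightarrow> 'a \<Rightarrow> nat \<Rightarrow> nat \<Rightarrow> 'a" where
  "gen_IT n a b i j =
     (if j < n then (if i = j then 1 else 0) else tridiag_toeplitz n a b i (j - n))"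

definition linear_code :: "nat \<Rightarrow> nat \<Rightarrow> (nat \<Rightarrow> nat \<Rightarrow> 'a::field) \<Rightarrow> (nat \<Rightarrow> 'a) set" where
  "linear_code N k G =
     {x. \<exists>u. x = (\<lambda>j. if j < N then (\<Sum>i<k. u i * G i j) else 0)}"

definition euclid_dual :: "nat \<Rightarrow> (nat \<Rightarrow> 'a::field) set \<Rightarrow> (nat \<Rightarrow> 'a) set" where
  "euclid_dual N C =
     {y. (\<forall>j\<ge>N. y j = 0) \<and> (\<forall>x\<in>C. (\<Sum>j<N. x j * y j) = 0)}"

definition is_LCD :: "nat \<Rightarrow> (nat \<Rightarrow> 'a::field) set \<Rightarrow> bool" where
  "is_LCD N C \<longleftrightarrow> C \<inter> euclid_dual N C = {(\<lambda>_. 0)}"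

definition C_hat :: "nat \<Rightarrow> 'a::field \<Rightarrow> 'a \<Rightarrow> (nat \<Rightarrow> 'a) set" where
  "C_hat n a b = linear_code (2 * n) n (gen_IT n a b)"

end

theory Submission
  imports Defs "HOL-Computational_Algebra.Polynomial"
begin


datatype 'a gi = GI (gre: 'a) (gim: 'a)

lemma gi_eq_iff: "x = y \<longleftrightarrow> gre x = gre y \<and> gim x = gim y"
  by (cases x; cases y) auto

instantiation gi :: (comm_ring_1) comm_ring_1
begin
definition "0 = GI 0 0"
definition "1 = GI 1 0"
definition "x + y = GI (gre x + gre y) (gim x + gim y)"
definition "x - y = GI (gre x - gre y) (gim x - gim y)"
definition "- x = GI (- gre x) (- gim x)"
definition "x * y = GI (gre x * gre y - gim x * gim y) (gre x * gim y + gim x * gre y)"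
instance
  by standard (simp_all add: gi_eq_iff zero_gi_def one_gi_def plus_gi_def minus_gi_def
       uminus_gi_def times_gi_def algebra_simps)
end

lemma gi_simps [simp]:
  "gre 0 = 0" "gim 0 = 0" "gre 1 = 1" "gim 1 = 0"
  "gre (x + y) = gre x + gre y" "gim (x + y) = gim x + gim y"
  "gre (x - y) = gre x - gre y" "gim (x - y) = gim x - gim y"
  "gre (- x) = - gre x" "gim (- x) = - gim x"
  "gre (x * y) = gre x * gre y - gim x * gim y" "gim (x * y) = gre x * gim y + gim x * gre y"
  by (simp_all add: zero_gi_def one_gi_def plus_gi_def minus_gi_def uminus_gi_def times_gi_def)

lemma gi_of_nat: "(of_nat k :: 'a::comm_ring_1 gi) = GI (of_nat k) 0"
  by (induction k) (simp_all add: gi_eq_iff)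

lemma gi_numeral: "(numeral k :: 'a::comm_ring_1 gi) = GI (numeral k) 0"
  using gi_of_nat[of "numeral k"] by simp

lemma CHAR_gi: "CHAR('a::comm_ring_1 gi) = CHAR('a)"
  by (rule CHAR_eqI) (simp_all add: gi_of_nat gi_eq_iff of_nat_eq_0_iff_char_dvd)

definition nrm :: "'a::comm_ring_1 gi \<Rightarrow> 'a" where "nrm x = gre x * gre x + gim x * gim x"

lemma nrm_mult: "nrm (x * y) = nrm x * nrm y"
  by (simp add: nrm_def algebra_simps)

lemma nrm_power: "nrm (x ^ k) = nrm x ^ k"
  by (induction k) (simp_all add: nrm_mult, simp add: nrm_def)

lemma nrm_zero_if: fixes x w :: "'a::field gi"
  assumes "x * w = 0" "w \<noteq> 0" shows "nrm x = 0"
proof -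
  have "GI (gre x) (- gim x) * x * w = 0" using assms by (simp add: mult.assoc)
  moreover have "GI (gre x) (- gim x) * x = GI (nrm x) 0" by (simp add: gi_eq_iff nrm_def)
  ultimately have "GI (nrm x) 0 * w = 0" by simp
  then have "nrm x * gre w = 0" "nrm x * gim w = 0" by (simp_all add: gi_eq_iff)
  with assms(2) show ?thesis by (auto simp: gi_eq_iff)
qed

fun ch :: "'r::comm_ring_1 \<Rightarrow> nat \<Rightarrow> 'r" where
  "ch y 0 = 0" | "ch y (Suc 0) = 1" | "ch y (Suc (Suc k)) = y * ch y (Suc k) - ch y k"



definition mc :: "'r::comm_ring_1 \<Rightarrow> 'r \<Rightarrow> 'r \<Rightarrow> bool" where "mc P a b \<longleftrightarrow> P dvd a - b"

lemma mc_refl: "mc P a a" by (simp add: mc_def)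
lemma mc_sym: "mc P a b \<Longrightarrow> mc P b a" unfolding mc_def by (metis dvd_minus_iff minus_diff_eq)
lemma mc_trans: "mc P a b \<Longrightarrow> mc P b c \<Longrightarrow> mc P a c"
  unfolding mc_def by (metis diff_add_cancel dvd_add add_diff_eq diff_diff_eq2)
lemma mc_add: "mc P a b \<Longrightarrow> mc P c d \<Longrightarrow> mc P (a + c) (b + d)"
proof -
  assume "mc P a b" "mc P c d"
  then show ?thesis unfolding mc_def
    by (metis add_diff_add dvd_add)
qed
lemma mc_diff: "mc P a b \<Longrightarrow> mc P c d \<Longrightarrow> mc P (a - c) (b - d)"
proof -
  assume "mc P a b" "mc P c d"
  then show ?thesis unfolding mc_def
    by (metis diff_diff_eq2 dvd_diff diff_add_eq add_diff_add diff_conv_add_uminus)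
qed
lemma mc_mult: "mc P a b \<Longrightarrow> mc P c d \<Longrightarrow> mc P (a * c) (b * d)"
proof -
  assume ab: "mc P a b" and cd: "mc P c d"
  have "a * c - b * d = (a - b) * c + b * (c - d)" by (simp add: algebra_simps)
  then show ?thesis using ab cd unfolding mc_def by (metis dvd_add dvd_mult2 dvd_mult)
qed
lemma mc_power: "mc P a b \<Longrightarrow> mc P (a ^ k) (b ^ k)"
  by (induction k) (simp_all add: mc_refl mc_mult)
lemma mc_dvd: "P dvd a \<Longrightarrow> mc P a 0" by (simp add: mc_def)

lemma ch_pow:
  fixes y :: "'r::comm_ring_1" and v P :: "'r poly"
  assumes "mc P (v^2) (smult y v - 1)"
  shows "mc P (v ^ Suc k) (smult (ch y (Suc k)) v - [:ch y k:])"
proof (induction k)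
  case 0 then show ?case by (simp add: mc_refl)
next
  case (Suc k)
  have "mc P (v * v ^ Suc k) (v * (smult (ch y (Suc k)) v - [:ch y k:]))"
    by (rule mc_mult[OF mc_refl Suc])
  moreover have "v * (smult (ch y (Suc k)) v - [:ch y k:]) = smult (ch y (Suc k)) (v^2) - smult (ch y k) v"
    by (simp add: algebra_simps power2_eq_square)
  moreover have "mc P (smult (ch y (Suc k)) (v^2) - smult (ch y k) v)
     (smult (ch y (Suc k)) (smult y v - 1) - smult (ch y k) v)"
    using assms unfolding mc_def by (metis diff_diff_eq2 dvd_smult smult_diff_right diff_add_cancel
       add_diff_cancel_right)
  moreover have "smult (ch y (Suc k)) (smult y v - 1) - smult (ch y k) v =
      smult (ch y (Suc (Suc k))) v - [:ch y (Suc k):]"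
  proof -
    have "smult (ch y (Suc k)) (smult y v - 1) = smult (y * ch y (Suc k)) v - smult (ch y (Suc k)) 1"
      by (simp add: smult_diff_right mult.commute)
    moreover have "smult (ch y (Suc k)) 1 = [:ch y (Suc k):]" by (simp add: one_pCons)
    moreover have "smult (ch y (Suc (Suc k))) v = smult (y * ch y (Suc k)) v - smult (ch y k) v"
      by (simp add: smult_diff_left)
    ultimately show ?thesis by simp
  qed
  ultimately show ?case by (metis mc_trans power_Suc)
qed



lemma ch_frob:
  fixes y :: "'r::comm_ring_1"
  assumes pr: "prime CHAR('r)" and od: "odd CHAR('r)" and two: "\<And>e::'r. 2 * e = 0 \<Longrightarrow> e = 0"
  shows "ch y (CHAR('r) * j) = ch y j ^ CHAR('r) * (y^2 - 4) ^ ((CHAR('r) - 1) div 2)"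
proof -
  define p where "p = CHAR('r)"
  define h where "h = (p - 1) div 2"
  have p21: "p = 2 * h + 1" using od unfolding p_def h_def by simp
  define z :: "'r poly" where "z = [:0, 1:]"
  define w :: "'r poly" where "w = [:y, -1:]"
  define P :: "'r poly" where "P = [:1, -y, 1:]"
  define D where "D = y^2 - 4"
  have zP: "z^2 - (smult y z - 1) = P" unfolding z_def P_def
    by (simp add: power2_eq_square one_pCons)
  have wP: "w^2 - (smult y w - 1) = P" unfolding w_def P_def
    by (simp add: power2_eq_square one_pCons algebra_simps)
  have zw2: "(z - w)^2 = [:D:] + smult 4 P" unfolding z_def w_def P_def D_def
    by (simp add: power2_eq_square one_pCons algebra_simps)
  have zw: "z - w = [:- y, 2:]" unfolding z_def w_def by simp
  have mz: "mc P (z^2) (smult y z - 1)" using zP by (simp add: mc_def)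
  have mw: "mc P (w^2) (smult y w - 1)" using wP by (simp add: mc_def)
  have L3: "mc P (z^k - w^k) (smult (ch y k) (z - w))" for k
  proof (cases k)
    case 0 then show ?thesis by (simp add: mc_refl)
  next
    case (Suc j)
    have "mc P (z^k - w^k) ((smult (ch y (Suc j)) z - [:ch y j:]) - (smult (ch y (Suc j)) w - [:ch y j:]))"
      unfolding Suc by (intro mc_diff ch_pow mz mw)
    then show ?thesis by (simp add: smult_diff_right Suc)
  qed
  have cp: "CHAR('r poly) = p" by (simp add: p_def)
  have frob: "(a - b)^p = a^p - b^p" for a b :: "'r poly"
  proof -
    have "(a + (- b))^p = a^p + (- b)^p"
      by (rule freshmans_dream) (simp_all add: cp pr p_def)
    moreover have "(- b)^p = - (b^p)"
      by (rule minus_power_prime_CHAR) (simp_all add: cp pr p_def)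
    ultimately show ?thesis by simp
  qed
  have A1: "z^(p*j) - w^(p*j) = (z^j - w^j)^p"
    by (simp add: frob power_mult[symmetric] mult.commute)
  have m1: "mc P ((z^j - w^j)^p) ((smult (ch y j) (z - w))^p)" by (intro mc_power L3)
  have e1: "(smult (ch y j) (z - w))^p = smult (ch y j ^ p) ((z - w) * ((z-w)^2)^h)"
    by (simp add: smult_power p21 power_mult[symmetric] power_add mult.commute)
  have m2: "mc P ((z - w) * ((z-w)^2)^h) ((z - w) * [:D:]^h)"
    by (intro mc_mult mc_refl mc_power) (simp add: zw2 mc_def dvd_smult)
  have m3: "mc P (smult c ((z - w) * ((z-w)^2)^h)) (smult c ((z - w) * [:D:]^h))" for c
    using m2 unfolding mc_def by (simp add: dvd_smult flip: smult_diff_right)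
  have "mc P (z^(p*j) - w^(p*j)) (smult (ch y j ^ p) ((z - w) * [:D:]^h))"
    unfolding A1 using m1 m3 e1 by (metis mc_trans)
  moreover have "smult (ch y j ^ p) ((z - w) * [:D:]^h) = smult (ch y j ^ p * D^h) (z - w)"
    by (simp add: poly_const_pow mult.commute)
  ultimately have "mc P (smult (ch y (p*j)) (z - w)) (smult (ch y j ^ p * D^h) (z - w))"
    by (metis L3 mc_sym mc_trans)
  then have dv: "P dvd smult (ch y (p*j) - ch y j ^ p * D^h) [:- y, 2:]"
    by (simp only: mc_def smult_diff_left[symmetric] zw)
  define e where "e = ch y (p*j) - ch y j ^ p * D^h"
  have "e = 0"
  proof (rule ccontr)
    assume ne: "e \<noteq> 0"
    have one: "(1::'r) \<noteq> 0"
    proof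
      assume "(1::'r) = 0"
      then have "of_nat 1 = (0::'r)" by simp
      then have "CHAR('r) dvd 1" using of_nat_eq_0_iff_char_dvd by blast
      with pr show False by simp
    qed
    obtain R where R: "smult e [:- y, 2:] = P * R" using dv e_def by (auto elim: dvdE)
    have "coeff (smult e [:- y, 2:]) 1 = e * 2" by simp
    moreover have "e * 2 \<noteq> 0" using two ne by (metis mult.commute)
    ultimately have "R \<noteq> 0" using R by auto
    have dP: "degree P = 2" unfolding P_def using one by simp
    have "coeff (P * R) (degree P + degree R) = coeff P (degree P) * coeff R (degree R)"
      by (rule coeff_mult_degree_sum)
    also have "\<dots> = coeff R (degree R)" using dP by (simp add: P_def)
    also have "\<dots> \<noteq> 0" using \<open>R \<noteq> 0\<close> by simp
    finally have "coeff (P * R) (2 + degree R) \<noteq> 0" using dP by simp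
    moreover have "coeff (smult e [:- y, 2:]) (2 + degree R) = 0" by (simp add: coeff_pCons split: nat.split)
    ultimately show False using R by metis
  qed
  then show ?thesis unfolding e_def p_def h_def D_def by simp
qed



lemma sum_split_add: "sum f {..<m + (n::nat)} = sum f {..<m} + (\<Sum>i<n. f (m + i))"
  by (induction n) (simp_all add: add.assoc)

lemma sum_delta_mult:
  "k < (n::nat) \<Longrightarrow> (\<Sum>i<n. (if i = k then 1 else 0) * (f i::'a::comm_ring_1)) = f k"
proof -
  assume "k < n"
  have "(\<Sum>i<n. (if i = k then 1 else 0) * f i) = (\<Sum>i<n. if i = k then f i else 0)"
    by (rule sum.cong) auto
  then show ?thesis using \<open>k < n\<close> by (simp add: sum.delta)
qed

lemma sum_delta_mult':
  "k < (n::nat) \<Longrightarrow> (\<Sum>i<n. (if k = i then 1 else 0) * (f i::'a::comm_ring_1)) = f k"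
  using sum_delta_mult[of k n f] by (simp add: eq_commute[of k])

lemma T_sym: "tridiag_toeplitz n a b k l = tridiag_toeplitz n a b l k"
  unfolding tridiag_toeplitz_def by auto

lemma tsum:
  fixes f :: "nat \<Rightarrow> 'a::field"
  assumes f0: "f 0 = 0" and fn: "\<forall>k>n. f k = 0" and l: "l < n"
  shows "(\<Sum>i<n. f (i+1) * tridiag_toeplitz n a b i l) = a * f (l+1) + b * f l + b * f (l+2)"
proof -
  have "(\<Sum>i<n. f (i+1) * tridiag_toeplitz n a b i l) =
        (\<Sum>i<n. (if i = l then a * f (l+1) else 0) + (if i = Suc l then b * f (l+2) else 0)
              + (if Suc i = l then b * f l else 0))"
    by (rule sum.cong) (use l in \<open>auto simp: tridiag_toeplitz_def\<close>)
  also have "\<dots> = a * f (l+1) + (if Suc l < n then b * f (l+2) else 0) + (\<Sum>i<n. if Suc i = l then b * f l else 0)"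
    using l by (simp add: sum.distrib)
  also have "(if Suc l < n then b * f (l+2) else 0) = b * f (l+2)"
    using fn by auto
  also have "(\<Sum>i<n. if Suc i = l then b * f l else 0) = b * f l"
  proof (cases l)
    case 0 then show ?thesis by (simp add: f0)
  next
    case (Suc l')
    have "(\<Sum>i<n. if Suc i = l then b * f l else 0) = (\<Sum>i<n. if i = l' then b * f l else 0)"
      using Suc by (intro sum.cong) auto
    also have "\<dots> = b * f l" using Suc l by simp
    finally show ?thesis .
  qed
  finally show ?thesis by simp
qed

lemma lcd_crit:
  fixes a b :: "'a::field"
  assumes H: "\<And>u. \<forall>k<n. u k + (\<Sum>l<n. tridiag_toeplitz n a b k l * (\<Sum>i<n. u i * tridiag_toeplitz n a b i l)) = 0
     \<Longrightarrow> \<forall>k<n. u k = 0"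
  shows "is_LCD (2*n) (C_hat n a b)"
proof -
  let ?T = "tridiag_toeplitz n a b"
  let ?G = "gen_IT n a b"
  let ?vec = "\<lambda>u. (\<lambda>j. if j < 2*n then (\<Sum>i<n. u i * ?G i j) else 0)"
  have C: "C_hat n a b = {x. \<exists>u. x = ?vec u}" unfolding C_hat_def linear_code_def by simp
  have z: "?vec (\<lambda>_. 0) = (\<lambda>_. 0)" by auto
  have Gk: "?G i k = (if i = k then 1 else 0)" if "k < n" for i k
    using that unfolding gen_IT_def by simp
  have Gnk: "?G i (n + l) = ?T i l" if "l < n" for i l
    using that unfolding gen_IT_def by simp
  have vk: "?vec u k = u k" if "k < n" for u k
    using that by (simp add: Gk if_distrib cong: if_cong)
  have vnl: "?vec u (n + l) = (\<Sum>i<n. u i * ?T i l)" if "l < n" for u l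
    using that by (simp add: Gnk)
  show ?thesis
    unfolding is_LCD_def
  proof (rule set_eqI, rule iffI)
    fix x assume "x \<in> C_hat n a b \<inter> euclid_dual (2*n) (C_hat n a b)"
    then obtain u where xu: "x = ?vec u" and dual: "\<forall>x'\<in>C_hat n a b. (\<Sum>j<2*n. x' j * x j) = 0"
      unfolding C euclid_dual_def by auto
    have "\<forall>k<n. u k = 0"
    proof (rule H, intro allI impI)
      fix k assume k: "k < n"
      let ?e = "\<lambda>i. if i = k then (1::'a) else 0"
      have ein: "?vec ?e \<in> C_hat n a b" unfolding C by (intro CollectI exI) (rule refl)
      have "(\<Sum>j<2*n. ?vec ?e j * x j) = 0" by (rule bspec[OF dual ein])
      moreover have "?vec ?e j = ?G k j" if "j < 2*n" for j
        using that k by (simp only: sum_delta_mult if_True)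
      ultimately have 0: "(\<Sum>j<n+n. ?G k j * x j) = 0"
        by (simp add: mult_2)
      have "(\<Sum>j<n+n. ?G k j * x j) = (\<Sum>j<n. ?G k j * x j) + (\<Sum>l<n. ?G k (n+l) * x (n+l))"
        by (rule sum_split_add)
      also have "(\<Sum>j<n. ?G k j * x j) = x k"
      proof -
        have "(\<Sum>j<n. ?G k j * x j) = (\<Sum>j<n. (if k = j then 1 else 0) * x j)"
          by (rule sum.cong) (simp_all add: Gk)
        then show ?thesis using k by (simp only: sum_delta_mult')
      qed
      also have "x k = u k" using k xu vk by simp
      also have "(\<Sum>l<n. ?G k (n+l) * x (n+l)) = (\<Sum>l<n. ?T k l * (\<Sum>i<n. u i * ?T i l))"
        by (rule sum.cong) (simp_all add: Gnk xu vnl del: mult_2)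
      finally show "u k + (\<Sum>l<n. ?T k l * (\<Sum>i<n. u i * ?T i l)) = 0" using 0 by simp
    qed
    then have "?vec u = (\<lambda>_. 0)"
      by (intro ext) simp
    then show "x \<in> {\<lambda>_. 0}" using xu by simp
  next
    fix x :: "nat \<Rightarrow> 'a" assume "x \<in> {\<lambda>_. 0}"
    then have x0: "x = (\<lambda>_. 0)" by simp
    have "x \<in> C_hat n a b" unfolding C x0
      by (rule CollectI, rule exI[of _ "\<lambda>_. 0"], rule z[symmetric])
    moreover have "x \<in> euclid_dual (2*n) (C_hat n a b)" unfolding euclid_dual_def x0 by simp
    ultimately show "x \<in> C_hat n a b \<inter> euclid_dual (2*n) (C_hat n a b)" by simp
  qed
qed



lemma kernel_trivial:
  fixes a b :: "'a::field"
  assumes b: "b \<noteq> 0" and N: "nrm (ch (GI (-a/b) (-1/b)) (n+1)) \<noteq> 0"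
    and eq: "\<forall>k<n. u k + (\<Sum>l<n. tridiag_toeplitz n a b k l * (\<Sum>i<n. u i * tridiag_toeplitz n a b i l)) = 0"
  shows "\<forall>k<n. u k = 0"
proof -
  let ?T = "tridiag_toeplitz n a b"
  define v where "v l = (\<Sum>i<n. u i * ?T i l)" for l
  define s where "s k = (if 1 \<le> k \<and> k \<le> n then u (k-1) else 0)" for k
  define t where "t k = (if 1 \<le> k \<and> k \<le> n then v (k-1) else 0)" for k
  have vt: "v l = a * s (l+1) + b * s l + b * s (l+2)" if l: "l < n" for l
  proof -
    have "v l = (\<Sum>i<n. s (i+1) * ?T i l)" unfolding v_def s_def by (rule sum.cong) auto
    also have "\<dots> = a * s (l+1) + b * s l + b * s (l+2)"
      by (rule tsum) (use l in \<open>auto simp: s_def\<close>)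
    finally show ?thesis .
  qed
  have eq2: "s (k+1) + a * t (k+1) + b * t k + b * t (k+2) = 0" if k: "k < n" for k
  proof -
    have "(\<Sum>l<n. ?T k l * v l) = (\<Sum>l<n. t (l+1) * ?T l k)"
      unfolding t_def by (rule sum.cong) (auto simp: T_sym[of n a b k] mult.commute)
    also have "\<dots> = a * t (k+1) + b * t k + b * t (k+2)"
      by (rule tsum) (use k in \<open>auto simp: t_def\<close>)
    finally have "(\<Sum>l<n. ?T k l * v l) = a * t (k+1) + b * t k + b * t (k+2)" .
    moreover have "s (k+1) = u k" using k by (simp add: s_def)
    moreover have "u k + (\<Sum>l<n. ?T k l * v l) = 0" using eq k unfolding v_def by blast
    ultimately show ?thesis by (simp add: add.assoc)
  qed
  define W where "W k = GI (s k) (t k)" for k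
  define x where "x = GI (-a/b) (-1/b)"
  have rec: "W (k+2) = x * W (k+1) - W k" if k: "k < n" for k
  proof -
    have 1: "t (k+1) = a * s (k+1) + b * s k + b * s (k+2)" using vt[OF k] k by (simp add: t_def)
    have 2: "s (Suc (Suc k)) = t (Suc k) / b - a * s (Suc k) / b - s k"
      using 1 b by (simp add: field_simps)
    have 3: "t (Suc (Suc k)) = - (a * t (Suc k) / b) - s (Suc k) / b - t k"
    proof -
      have e: "b * t (Suc (Suc k)) = - s (Suc k) - a * t (Suc k) - b * t k"
        using eq2[OF k] by (simp add: eq_diff_eq eq_neg_iff_add_eq_0 algebra_simps)
      have "t (Suc (Suc k)) = (b * t (Suc (Suc k))) / b" using b by simp
      also have "\<dots> = (- s (Suc k) - a * t (Suc k) - b * t k) / b" using e by simp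
      also have "\<dots> = - (a * t (Suc k) / b) - s (Suc k) / b - t k" using b
        by (simp add: diff_divide_distrib)
      finally show ?thesis .
    qed
    show ?thesis unfolding W_def x_def by (simp add: gi_eq_iff 2 3)
  qed
  have Wk: "k + 1 \<le> n + 1 \<longrightarrow> W k = ch x k * W 1 \<and> W (k+1) = ch x (k+1) * W 1" for k
  proof (induction k)
    case 0 then show ?case by (simp add: W_def s_def t_def gi_eq_iff)
  next
    case (Suc k)
    show ?case
    proof
      assume "Suc k + 1 \<le> n + 1"
      then have k: "k < n" by simp
      with Suc have IH: "W k = ch x k * W 1" "W (Suc k) = ch x (Suc k) * W 1" by auto
      have "W (Suc k + 1) = x * W (Suc k) - W k" using rec[OF k] by simp
      also have "\<dots> = ch x (Suc (Suc k)) * W 1" by (simp add: IH algebra_simps)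
      finally show "W (Suc k) = ch x (Suc k) * W 1 \<and> W (Suc k + 1) = ch x (Suc k + 1) * W 1"
        using IH by simp
    qed
  qed
  have "W (n+1) = 0" by (simp add: W_def s_def t_def gi_eq_iff)
  then have "ch x (n+1) * W 1 = 0" using Wk[of n] by simp
  then have W1: "W 1 = 0" using N nrm_zero_if unfolding x_def by blast
  show ?thesis
  proof (intro allI impI)
    fix k assume k: "k < n"
    have "W (k+1) = 0" using Wk[of k] k W1 by simp
    then show "u k = 0" using k by (simp add: W_def s_def gi_eq_iff)
  qed
qed



lemma deg_nrm:
  fixes c d :: "'a::field poly"
  assumes "degree c \<le> k" "coeff c k \<noteq> 0" "degree d \<le> k" "coeff d k = 0"
  shows "nrm (GI c d) \<noteq> 0 \<and> degree (nrm (GI c d)) \<le> 2 * k"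
proof -
  have dc: "degree c = k" using assms by (metis le_antisym le_degree)
  have cc: "coeff (c * c) (2 * k) = coeff c k * coeff c k"
    using coeff_mult_degree_sum[of c c] dc by (simp add: mult_2)
  have dcc: "degree (c * c) \<le> 2 * k" using degree_mult_le[of c c] dc by simp
  have dd: "coeff (d * d) (2 * k) = 0 \<and> degree (d * d) \<le> 2 * k"
  proof (cases "d = 0")
    case True then show ?thesis by simp
  next
    case False
    then have "degree d < k" using assms(3,4) eq_zero_or_degree_less by blast
    then have "degree (d * d) < 2 * k" using degree_mult_le[of d d] by simp
    then show ?thesis by (simp add: coeff_eq_0)
  qed
  have "coeff (nrm (GI c d)) (2 * k) = coeff c k * coeff c k"
    unfolding nrm_def using cc dd by simp
  then have "nrm (GI c d) \<noteq> 0" using assms(2) by auto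
  moreover have "degree (nrm (GI c d)) \<le> 2 * k"
    unfolding nrm_def using dcc dd degree_add_le by (simp add: degree_add_le)
  ultimately show ?thesis by simp
qed

definition ev :: "'a::comm_ring_1 \<Rightarrow> 'a poly gi \<Rightarrow> 'a gi" where
  "ev a z = GI (poly (gre z) a) (poly (gim z) a)"

lemma ev_simps [simp]:
  "ev a (z * w) = ev a z * ev a w" "ev a (z - w) = ev a z - ev a w" "ev a (z + w) = ev a z + ev a w"
  "ev a 0 = 0" "ev a 1 = 1" "ev a (numeral k) = numeral k"
  by (simp_all add: ev_def gi_eq_iff gi_numeral numeral_poly)

lemma ev_ch: "ev a (ch z k) = ch (ev a z) k"
  by (induction z k rule: ch.induct) simp_all

lemma ev_nrm: "nrm (ev a z) = poly (nrm z) a"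
  by (simp add: ev_def nrm_def)

lemma chX_struct:
  fixes b :: "'a::field"
  defines "X \<equiv> GI (pCons 0 [:-1/b:]) [:-1/b:] :: 'a poly gi"
  shows "(\<forall>i>k. coeff (gre (ch X (Suc k))) i = 0 \<and> coeff (gim (ch X (Suc k))) i = 0)
       \<and> coeff (gre (ch X (Suc k))) k = (-1/b)^k \<and> coeff (gim (ch X (Suc k))) k = 0
       \<and> (\<forall>i\<ge>k. coeff (gre (ch X k)) i = 0 \<and> coeff (gim (ch X k)) i = 0)"
proof (induction k)
  case 0 then show ?case by (auto simp: coeff_1)
next
  case (Suc k)
  have cx1: "coeff (gre (X * z)) (Suc i) = (-1/b) * coeff (gre z) i + (1/b) * coeff (gim z) (Suc i)" for z i
    by (simp add: X_def)
  have cx2: "coeff (gim (X * z)) (Suc i) = (-1/b) * coeff (gim z) i - (1/b) * coeff (gre z) (Suc i)" for z i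
    by (simp add: X_def)
  let ?c = "ch X (Suc k)" and ?d = "ch X k"
  have e: "ch X (Suc (Suc k)) = X * ?c - ?d" by simp
  have A: "\<forall>i>Suc k. coeff (gre (ch X (Suc (Suc k)))) i = 0 \<and> coeff (gim (ch X (Suc (Suc k)))) i = 0"
  proof (intro allI impI)
    fix i assume i: "Suc k < i"
    then obtain j where j: "i = Suc j" "j > k" by (cases i) auto
    show "coeff (gre (ch X (Suc (Suc k)))) i = 0 \<and> coeff (gim (ch X (Suc (Suc k)))) i = 0"
      unfolding e j(1) using Suc j(2) by (simp only: gi_simps(7,8) coeff_diff cx1 cx2) auto
  qed
  have B: "coeff (gre (ch X (Suc (Suc k)))) (Suc k) = (-1/b)^(Suc k)"
    unfolding e using Suc by (simp only: gi_simps(7,8) coeff_diff cx1 cx2) auto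
  have C: "coeff (gim (ch X (Suc (Suc k)))) (Suc k) = 0"
    unfolding e using Suc by (simp only: gi_simps(7,8) coeff_diff cx1 cx2) auto
  have D: "\<forall>i\<ge>Suc k. coeff (gre ?c) i = 0 \<and> coeff (gim ?c) i = 0"
    using Suc by auto
  show ?case using A B C D by blast
qed

lemma descent:
  fixes x :: "'a::field gi"
  assumes pr: "prime CHAR('a)" and od: "odd CHAR('a)"
    and z: "nrm (ch x (CHAR('a) ^ j * M)) = 0"
  shows "nrm (ch x M) = 0 \<or> nrm (x - 2) = 0 \<or> nrm (x + 2) = 0"
  using z
proof (induction j)
  case 0 then show ?case by simp
next
  case (Suc j)
  let ?p = "CHAR('a)"
  have prg: "prime CHAR('a gi)" using pr by (simp add: CHAR_gi)
  have odg: "odd CHAR('a gi)" using od by (simp add: CHAR_gi)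
  have two': "(2::'a) \<noteq> 0"
  proof
    assume "(2::'a) = 0"
    then have "of_nat 2 = (0::'a)" by simp
    then have "?p dvd 2" using of_nat_eq_0_iff_char_dvd by blast
    then have "?p \<le> 2" by (rule dvd_imp_le) simp
    moreover have "?p \<ge> 2" using pr prime_ge_2_nat by blast
    ultimately have "?p = 2" by simp
    with od show False by simp
  qed
  have two: "2 * e = 0 \<Longrightarrow> e = 0" for e :: "'a gi"
    using two' by (simp add: gi_eq_iff gi_numeral)
  have "ch x (CHAR('a gi) * (?p ^ j * M)) = ch x (?p ^ j * M) ^ CHAR('a gi) * (x^2 - 4) ^ ((CHAR('a gi) - 1) div 2)"
    by (rule ch_frob[OF prg odg two])
  then have "ch x (?p ^ Suc j * M) = ch x (?p ^ j * M) ^ ?p * ((x - 2) * (x + 2)) ^ ((?p - 1) div 2)"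
    by (simp add: CHAR_gi mult.assoc algebra_simps power2_eq_square)
  then have "nrm (ch x (?p ^ j * M)) ^ ?p * (nrm (x - 2) * nrm (x + 2)) ^ ((?p - 1) div 2) = 0"
    using Suc.prems by (simp add: nrm_mult nrm_power)
  then show ?case using Suc.IH by auto
qed



theorem corollary2p6:
  fixes b :: "'a::{finite,field}" and p q n r m :: nat
  assumes "prime p" and "odd p" and "CHAR('a) = p" and "card (UNIV :: 'a set) = q"
    and "b \<noteq> 0" and "n \<ge> 2"
    and "p ^ r dvd (n + 1)" and "\<not> p ^ (r + 1) dvd (n + 1)"
    and "n + 1 = p ^ r * (m + 1)"
    and "r \<ge> 1"
    and "q > 2 * m + 4"
  shows "\<exists>a::'a. is_LCD (2 * n) (C_hat n a b)"
proof -
  note pr = assms(1) and od = assms(2) and ch = assms(3) and cq = assms(4) and b = assms(5)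
    and nm = assms(9) and qm = assms(11)
  define X :: "'a poly gi" where "X = GI (pCons 0 [:-1/b:]) [:-1/b:]"
  define P where "P = nrm (ch X (Suc m)) * nrm (X - 2) * nrm (X + 2)"
  have S: "(\<forall>i>m. coeff (gre (ch X (Suc m))) i = 0 \<and> coeff (gim (ch X (Suc m))) i = 0)
       \<and> coeff (gre (ch X (Suc m))) m = (-1/b)^m \<and> coeff (gim (ch X (Suc m))) m = 0"
    using chX_struct[of m b] unfolding X_def by blast
  have N1: "nrm (ch X (Suc m)) \<noteq> 0 \<and> degree (nrm (ch X (Suc m))) \<le> 2 * m"
  proof -
    have "nrm (GI (gre (ch X (Suc m))) (gim (ch X (Suc m)))) \<noteq> 0 \<and>
          degree (nrm (GI (gre (ch X (Suc m))) (gim (ch X (Suc m))))) \<le> 2 * m"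
      by (rule deg_nrm) (use S b in \<open>auto intro: degree_le\<close>)
    then show ?thesis by simp
  qed
  have Xm: "X - 2 = GI [:-2, -1/b:] [:-1/b:]" unfolding X_def
    by (simp add: gi_eq_iff gi_numeral numeral_poly)
  have Xp: "X + 2 = GI [:2, -1/b:] [:-1/b:]" unfolding X_def
    by (simp add: gi_eq_iff gi_numeral numeral_poly)
  have N2: "nrm (X - 2) \<noteq> 0 \<and> degree (nrm (X - 2)) \<le> 2 * 1"
    unfolding Xm by (rule deg_nrm) (use b in auto)
  have N3: "nrm (X + 2) \<noteq> 0 \<and> degree (nrm (X + 2)) \<le> 2 * 1"
    unfolding Xp by (rule deg_nrm) (use b in auto)
  have P0: "P \<noteq> 0" unfolding P_def using N1 N2 N3 by simp
  have "degree P \<le> degree (nrm (ch X (Suc m)) * nrm (X - 2)) + degree (nrm (X + 2))"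
    unfolding P_def by (rule degree_mult_le)
  also have "\<dots> \<le> (degree (nrm (ch X (Suc m))) + degree (nrm (X - 2))) + degree (nrm (X + 2))"
    by (intro add_mono degree_mult_le order_refl)
  also have "\<dots> \<le> 2 * m + 2 + 2" using N1 N2 N3 by linarith
  finally have "degree P \<le> 2 * m + 2 + 2" .
  then have cardP: "card {a. poly P a = 0} < q"
    using card_poly_roots_bound[OF P0] qm by linarith
  have "\<exists>a. poly P a \<noteq> 0"
  proof (rule ccontr)
    assume "\<not> (\<exists>a. poly P a \<noteq> 0)"
    then have "{a. poly P a = 0} = UNIV" by auto
    then show False using cardP cq by simp
  qed
  then obtain a where a: "poly P a \<noteq> 0" by blast
  define x where "x = GI (-a/b) (-1/b)"
  have evX: "ev a X = x" unfolding X_def x_def ev_def by (simp add: gi_eq_iff)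
  have "nrm (ch x (n+1)) \<noteq> 0"
  proof
    assume "nrm (ch x (n+1)) = 0"
    then have "nrm (ch x (CHAR('a) ^ r * Suc m)) = 0" using nm ch by simp
    then have "nrm (ch x (Suc m)) = 0 \<or> nrm (x - 2) = 0 \<or> nrm (x + 2) = 0"
      using descent[of x r "Suc m"] pr od ch by simp
    moreover have "poly P a = nrm (ch x (Suc m)) * nrm (x - 2) * nrm (x + 2)"
    proof -
      have "poly P a = poly (nrm (ch X (Suc m))) a * poly (nrm (X - 2)) a * poly (nrm (X + 2)) a"
        unfolding P_def by (simp only: poly_mult)
      also have "\<dots> = nrm (ev a (ch X (Suc m))) * nrm (ev a (X - 2)) * nrm (ev a (X + 2))"
        by (simp only: ev_nrm)
      also have "\<dots> = nrm (ch x (Suc m)) * nrm (x - 2) * nrm (x + 2)"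
        by (simp only: ev_ch evX ev_simps)
      finally show ?thesis .
    qed
    ultimately show False using a by auto
  qed
  have "is_LCD (2*n) (C_hat n a b)"
  proof (rule lcd_crit)
    fix u assume "\<forall>k<n. u k + (\<Sum>l<n. tridiag_toeplitz n a b k l * (\<Sum>i<n. u i * tridiag_toeplitz n a b i l)) = 0"
    with kernel_trivial[OF b, of a n u] \<open>nrm (ch x (n+1)) \<noteq> 0\<close>
    show "\<forall>k<n. u k = 0" unfolding x_def by blast
  qed
  then show ?thesis by blast
qed

end
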